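(* Let $m\ge 1$ and let $P_{\mathcal F}$ be the set of nonzero polynomials of the form $f(z)=\sum_{k=0}^m c_k z^{\underline{k}}$ with all $c_k\in\mathbb R$, $c_k\ge0$. A complex number $w$ is a root of no polynomial in $P_{\mathcal F}$ if and only if $w\in S\cup\overline S$, where $$S=\Big\{z\in\mathbb C \ \Big|\ \mathrm{Arg}\,z\ge0\ \text{and}\ \sum_{i=1}^m\mathrm{Arg}(z-i+1)<\pi\Big\}$$ and $\overline S=\{\bar z\mid z\in S\}$.
   Context: $z^{\underline{k}}=z(z-1)\cdots(z-k+1)$, $z^{\underline 0}=1$. For nonzero $z$, $\mathrm{Arg}\,z$ is the principal argument, $-\pi<\mathrm{Arg}\,z\le\pi$; by convention $\mathrm{Arg}\,0=\infty$ (so any $z$ for which some $z-i+1=0$, $1\le i\le m$, is not in $S$). *)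

theory Defs
  imports "HOL-Analysis.Analysis"
begin

definition falling_fact :: "complex \<Rightarrow> nat \<Rightarrow> complex" where
  "falling_fact z k = (\<Prod>i<k. z - of_nat i)"

text \<open>The paper's convention Arg 0 = infinity means that any z with
  z - i + 1 = 0 for some 1 <= i <= m is excluded; we add this explicitly, and
  otherwise use the library's principal argument Arg (range (-pi, pi]).\<close>
definition S_set :: "nat \<Rightarrow> complex set" where
  "S_set m = {z. (\<forall>i\<in>{1..m}. z - of_nat i + 1 \<noteq> 0) \<and> Arg z \<ge> 0 \<and>
                 (\<Sum>i=1..m. Arg (z - of_nat i + 1)) < pi}"

definition P_F :: "nat \<Rightarrow> (complex \<Rightarrow> complex) set" where
  "P_F m = {f. \<exists>c :: nat \<Rightarrow> real. (\<forall>k\<le>m. c k \<ge> 0) \<and>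
               f = (\<lambda>z. \<Sum>k\<le>m. complex_of_real (c k) * falling_fact z k) \<and>
               f \<noteq> (\<lambda>_. 0)}"

end

theory Submission
  imports Defs
begin

lemma ff_polar:
  "falling_fact z k = rcis (\<Prod>i<k. cmod (z - of_nat i)) (\<Sum>i<k. Arg (z - of_nat i))"
proof (induction k)
  case 0
  then show ?case by (simp add: falling_fact_def)
next
  case (Suc k)
  have "falling_fact z (Suc k) = falling_fact z k * (z - of_nat k)"
    by (simp add: falling_fact_def)
  also have "\<dots> = rcis (\<Prod>i<k. cmod (z - of_nat i)) (\<Sum>i<k. Arg (z - of_nat i))
      * rcis (cmod (z - of_nat k)) (Arg (z - of_nat k))"
    using Suc by (simp add: rcis_cmod_Arg)
  also have "\<dots> = rcis (\<Prod>i<Suc k. cmod (z - of_nat i)) (\<Sum>i<Suc k. Arg (z - of_nat i))"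
    by (simp add: rcis_mult mult_ac add_ac)
  finally show ?case .
qed

lemma sum_shift: "(\<Sum>i=1..m. Arg (z - of_nat i + 1)) = (\<Sum>i<m. Arg (z - of_nat i))"
  by (induction m) (auto simp: algebra_simps)

lemma nz_shift: "(\<forall>i\<in>{1..m}. (z::complex) - of_nat i + 1 \<noteq> 0) \<longleftrightarrow> (\<forall>i<m. z \<noteq> of_nat i)"
proof
  assume H: "\<forall>i\<in>{1..m}. z - of_nat i + 1 \<noteq> 0"
  show "\<forall>i<m. z \<noteq> of_nat i"
  proof (intro allI impI)
    fix i assume "i < m"
    then have "Suc i \<in> {1..m}" by auto
    from H[rule_format, OF this] have "z - of_nat (Suc i) + 1 \<noteq> 0" .
    moreover have "z - of_nat (Suc i) + 1 = z - of_nat i" unfolding of_nat_Suc by algebra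
    ultimately show "z \<noteq> of_nat i" by simp
  qed
next
  assume H: "\<forall>i<m. z \<noteq> of_nat i"
  show "\<forall>i\<in>{1..m}. z - of_nat i + 1 \<noteq> 0"
  proof
    fix i assume "i \<in> {1..m}"
    then have "i - 1 < m" "of_nat i = of_nat (i-1) + (1::complex)" by (auto simp: of_nat_diff)
    with H show "z - of_nat i + 1 \<noteq> 0" by force
  qed
qed

lemma nonzero_fun:
  assumes "j \<le> m" "c j > 0" "\<forall>k\<le>m. c k \<ge> 0"
  shows "(\<lambda>z. \<Sum>k\<le>m. complex_of_real (c k) * falling_fact z k) \<noteq> (\<lambda>_. 0)"
proof
  assume H: "(\<lambda>z. \<Sum>k\<le>m. complex_of_real (c k) * falling_fact z k) = (\<lambda>_. 0)"
  define g where "g k = (\<Prod>i<k. real j - real i)" for k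
  have ffg: "falling_fact (of_nat j) k = of_real (g k)" for k
    by (simp add: falling_fact_def g_def)
  have gnn: "g k \<ge> 0" for k
  proof (cases "k \<le> j")
    case True then show ?thesis unfolding g_def by (intro prod_nonneg) auto
  next
    case False
    then have "j \<in> {..<k}" by auto
    then have "g k = 0" unfolding g_def by (intro prod_zero) auto
    then show ?thesis by simp
  qed
  have gpos: "g j > 0" unfolding g_def by (intro prod_pos) auto
  have "(\<Sum>k\<le>m. complex_of_real (c k) * falling_fact (of_nat j) k) = 0"
    using fun_cong[OF H, of "of_nat j"] by simp
  then have "Re (\<Sum>k\<le>m. complex_of_real (c k) * falling_fact (of_nat j) k) = 0" by simp
  then have E: "(\<Sum>k\<le>m. c k * g k) = 0" by (simp add: ffg)
  have "c j * g j \<le> (\<Sum>k\<le>m. c k * g k)"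
    by (rule member_le_sum) (use assms gnn in auto)
  moreover have "c j * g j > 0" using assms gpos by simp
  ultimately show False using E by simp
qed

lemma exists_pos:
  assumes "\<forall>k\<le>m. c k \<ge> 0"
    "(\<lambda>z. \<Sum>k\<le>m. complex_of_real (c k) * falling_fact z k) \<noteq> (\<lambda>_. 0)"
  shows "\<exists>j\<le>m. c j > 0"
proof (rule ccontr)
  assume "\<not> ?thesis"
  with assms(1) have "\<forall>k\<le>m. c k = 0" by force
  then have "(\<lambda>z. \<Sum>k\<le>m. complex_of_real (c k) * falling_fact z k) = (\<lambda>_. 0)" by simp
  with assms(2) show False by simp
qed

lemma theta_nonneg:
  assumes "Im w \<ge> 0"
  shows "0 \<le> Arg (w - of_nat i)"
  using assms by (simp add: Arg_less_0)

lemma theta_mono: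
  assumes "Im w \<ge> 0" "k \<le> n"
  shows "(\<Sum>i<k. Arg (w - of_nat i)) \<le> (\<Sum>i<n. Arg (w - of_nat i))"
  by (rule sum_mono2) (use assms theta_nonneg in auto)

lemma sum3:
  assumes "finite A"
  shows "(\<Sum>i\<in>A. complex_of_real ((if i = a then x else 0) + (if i = b then y else 0)
      + (if i = c then z else 0)) * g i) =
    (if a \<in> A then of_real x * g a else 0) + (if b \<in> A then of_real y * g b else 0)
    + (if c \<in> A then of_real z * g c else 0)"
proof -
  have "(\<Sum>i\<in>A. complex_of_real ((if i = a then x else 0) + (if i = b then y else 0)
      + (if i = c then z else 0)) * g i) =
     (\<Sum>i\<in>A. (if i = a then of_real x * g i else 0) + (if i = b then of_real y * g i else 0)
      + (if i = c then of_real z * g i else 0))"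
    by (intro sum.cong) (auto simp: distrib_right)
  also have "\<dots> = (if a \<in> A then of_real x * g a else 0) + (if b \<in> A then of_real y * g b else 0)
    + (if c \<in> A then of_real z * g c else 0)"
    using assms by (simp add: sum.distrib)
  finally show ?thesis .
qed

lemma upper:
  assumes "Im w \<ge> 0"
  shows "(\<forall>f\<in>P_F m. f w \<noteq> 0) \<longleftrightarrow> w \<in> S_set m"
proof
  define \<theta> where "\<theta> k = (\<Sum>i<k. Arg (w - of_nat i))" for k
  define r where "r k = (\<Prod>i<k. cmod (w - of_nat i))" for k
  have ffw: "falling_fact w k = rcis (r k) (\<theta> k)" for k
    unfolding r_def \<theta>_def by (rule ff_polar)
  have \<theta>0: "\<theta> k \<ge> 0" for k unfolding \<theta>_def
    by (intro sum_nonneg) (use theta_nonneg assms in auto)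
  have \<theta>mono: "k \<le> n \<Longrightarrow> \<theta> k \<le> \<theta> n" for k n unfolding \<theta>_def using theta_mono assms by blast
  have \<theta>Suc: "\<theta> (Suc k) = \<theta> k + Arg (w - of_nat k)" for k unfolding \<theta>_def by simp
  assume L: "\<forall>f\<in>P_F m. f w \<noteq> 0"
  show "w \<in> S_set m"
  proof (rule ccontr)
    assume nS: "w \<notin> S_set m"
    show False
    proof (cases "\<exists>j<m. w = of_nat j")
      case True
      then obtain j where j: "j < m" "w = of_nat j" by auto
      define c where "c k = (if k = m then 1 else (0::real))" for k
      define f where "f z = (\<Sum>k\<le>m. complex_of_real (c k) * falling_fact z k)" for z
      have "f \<noteq> (\<lambda>_. 0)" unfolding f_def by (rule nonzero_fun[of m]) (auto simp: c_def)
      then have "f \<in> P_F m" unfolding P_F_def f_def by (auto simp: c_def intro!: exI[of _ c])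
      moreover have "f w = 0"
      proof -
        have "f w = (\<Sum>k\<le>m. if k = m then falling_fact w k else 0)"
          unfolding f_def c_def by (intro sum.cong) auto
        also have "\<dots> = falling_fact w m" by simp
        also have "\<dots> = 0" unfolding falling_fact_def using j by (subst prod_zero_iff) auto
        finally show ?thesis .
      qed
      ultimately show False using L by auto
    next
      case False
      then have nz: "\<forall>i<m. w \<noteq> of_nat i" by auto
      have rpos: "k \<le> m \<Longrightarrow> r k > 0" for k
        unfolding r_def using nz by (intro prod_pos) auto
      have "Arg w \<ge> 0" using assms by (simp add: Arg_less_0)
      with nS nz have big: "\<theta> m \<ge> pi"
        unfolding S_set_def \<theta>_def sum_shift nz_shift by auto
      define k where "k = (LEAST k. pi \<le> \<theta> k)"
      have k1: "pi \<le> \<theta> k" unfolding k_def by (rule LeastI[of _ m]) (rule big)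
      have km: "k \<le> m" unfolding k_def by (rule Least_le) (rule big)
      have k0: "k \<noteq> 0"
      proof
        assume "k = 0" with k1 show False using pi_gt_zero by (simp add: \<theta>_def)
      qed
      then obtain k' where kk: "k = Suc k'" by (cases k) auto
      have k'lt: "\<theta> k' < pi"
        using not_less_Least[of k' "\<lambda>k. pi \<le> \<theta> k"] unfolding k_def[symmetric] kk by auto
      have k2: "\<theta> k < 2 * pi" using k'lt \<theta>Suc[of k'] Arg_le_pi[of "w - of_nat k'"] kk by auto
      define P where "P c \<longleftrightarrow> (\<forall>k\<le>m. c k \<ge> (0::real)) \<and> (\<exists>j\<le>m. c j > 0)" for c
      have key: "\<exists>c. P c \<and> (\<Sum>k\<le>m. complex_of_real (c k) * falling_fact w k) = 0"
      proof (cases "\<theta> k = pi")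
        case True
        define c where "c i = (if i = 0 then r k else 0) + (if i = k then 1 else (0::real))
           + (if i = k then 0 else 0)" for i
        have "P c" unfolding P_def c_def using rpos[OF km] km k0
          by (auto intro!: exI[of _ k] add_nonneg_nonneg)
        moreover have "(\<Sum>i\<le>m. complex_of_real (c i) * falling_fact w i) =
            of_real (r k) * falling_fact w 0 + falling_fact w k"
          unfolding c_def using km by (subst sum3) auto
        moreover have "falling_fact w k = - of_real (r k)" using True
          by (simp add: ffw rcis_def)
        moreover have "falling_fact w 0 = 1" by (simp add: falling_fact_def)
        ultimately show ?thesis by auto
      next
        case False
        with k1 have kgt: "\<theta> k > pi" by auto
        define p where "p = falling_fact w k'"
        define q where "q = falling_fact w k"
        have qp: "q = p * (w - of_nat k')" unfolding p_def q_def kk by (simp add: falling_fact_def)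
        have Imp: "Im p \<ge> 0" unfolding p_def ffw using rpos[of k'] km kk k'lt \<theta>0[of k']
          by (auto intro!: mult_nonneg_nonneg sin_ge_zero)
        have Imq: "Im q < 0" unfolding q_def ffw using rpos[of k] km kgt k2
          by (auto intro!: mult_pos_neg sin_lt_zero)
        define A where "A = (cmod p)^2 * Im w"
        define B where "B = - Im q"
        define C where "C = Im p"
        define c where "c i = (if i = 0 then A else 0) + (if i = k' then B else 0)
           + (if i = k then C else (0::real))" for i
        have A0: "A \<ge> 0" unfolding A_def using assms by simp
        have "P c" unfolding P_def c_def using Imp Imq km kk A0
          by (auto simp: B_def C_def intro!: exI[of _ k'] add_nonneg_nonneg add_nonneg_pos)
        moreover have "(\<Sum>i\<le>m. complex_of_real (c i) * falling_fact w i) =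
            of_real A * falling_fact w 0 + of_real B * p + of_real C * q"
          unfolding c_def using km kk by (subst sum3) (auto simp: p_def q_def)
        moreover have "falling_fact w 0 = 1" by (simp add: falling_fact_def)
        moreover have "of_real A + of_real B * p + of_real C * q = 0"
          unfolding A_def B_def C_def qp cmod_power2
          by (simp add: complex_eq_iff algebra_simps power2_eq_square)
        ultimately show ?thesis by auto
      qed
      then obtain c where c: "P c" "(\<Sum>k\<le>m. complex_of_real (c k) * falling_fact w k) = 0" by blast
      define f where "f z = (\<Sum>k\<le>m. complex_of_real (c k) * falling_fact z k)" for z
      from c(1) obtain j where "j \<le> m" "c j > 0" "\<forall>k\<le>m. c k \<ge> 0" unfolding P_def by auto
      then have "f \<noteq> (\<lambda>_. 0)" unfolding f_def by (rule nonzero_fun)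
      then have "f \<in> P_F m" unfolding P_F_def f_def using c(1) unfolding P_def by auto
      moreover have "f w = 0" using c(2) by (simp add: f_def)
      ultimately show False using L by auto
    qed
  qed
next
  define \<theta> where "\<theta> k = (\<Sum>i<k. Arg (w - of_nat i))" for k
  define r where "r k = (\<Prod>i<k. cmod (w - of_nat i))" for k
  have ffw: "falling_fact w k = rcis (r k) (\<theta> k)" for k
    unfolding r_def \<theta>_def by (rule ff_polar)
  have \<theta>0: "\<theta> k \<ge> 0" for k unfolding \<theta>_def
    by (intro sum_nonneg) (use theta_nonneg assms in auto)
  have \<theta>mono: "k \<le> n \<Longrightarrow> \<theta> k \<le> \<theta> n" for k n unfolding \<theta>_def using theta_mono assms by blast
  assume "w \<in> S_set m"
  then have nz: "\<forall>i<m. w \<noteq> of_nat i" and Tlt: "\<theta> m < pi"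
    unfolding S_set_def \<theta>_def sum_shift nz_shift by auto
  have rpos: "k \<le> m \<Longrightarrow> r k > 0" for k
    unfolding r_def using nz by (intro prod_pos) auto
  define T where "T = \<theta> m"
  have cospos: "k \<le> m \<Longrightarrow> Re (falling_fact w k * cis (- T / 2)) > 0" for k
  proof -
    assume km: "k \<le> m"
    have "falling_fact w k * cis (- T / 2) = rcis (r k) (\<theta> k - T/2)"
      by (simp add: ffw cis_rcis_eq rcis_mult)
    moreover have "cos (\<theta> k - T/2) > 0"
      using \<theta>0[of k] \<theta>mono[OF km] Tlt \<theta>0[of m] unfolding T_def
      by (intro cos_gt_zero_pi) auto
    ultimately show ?thesis using rpos[OF km] by simp
  qed
  show "\<forall>f\<in>P_F m. f w \<noteq> 0"
  proof
    fix f assume "f \<in> P_F m"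
    then obtain c where c: "\<forall>k\<le>m. c k \<ge> 0"
      "f = (\<lambda>z. \<Sum>k\<le>m. complex_of_real (c k) * falling_fact z k)" "f \<noteq> (\<lambda>_. 0)"
      unfolding P_F_def by auto
    from exists_pos[OF c(1)] c obtain j where j: "j \<le> m" "c j > 0" by auto
    have "Re (f w * cis (- T / 2)) = (\<Sum>k\<le>m. c k * Re (falling_fact w k * cis (- T / 2)))"
      by (simp add: c(2) sum_distrib_right mult.assoc)
    also have "\<dots> \<ge> c j * Re (falling_fact w j * cis (- T / 2))"
      by (rule member_le_sum) (use j c(1) cospos in \<open>auto intro: mult_nonneg_nonneg less_imp_le\<close>)
    finally have "Re (f w * cis (- T / 2)) > 0"
      using j cospos[OF j(1)] by (smt (verit) mult_pos_pos)
    then show "f w \<noteq> 0" by auto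
  qed
qed

lemma ff_cnj: "falling_fact (cnj z) k = cnj (falling_fact z k)"
  by (simp add: falling_fact_def)

lemma PF_cnj: "(\<forall>f\<in>P_F m. f (cnj w) \<noteq> 0) \<longleftrightarrow> (\<forall>f\<in>P_F m. f w \<noteq> 0)"
proof -
  have "f (cnj w) = cnj (f w)" if "f \<in> P_F m" for f
    using that unfolding P_F_def by (auto simp: ff_cnj)
  then show ?thesis by (metis complex_cnj_zero_iff)
qed

theorem theorem4p17:
  fixes m :: nat and w :: complex
  assumes "m \<ge> 1"
  shows "(\<forall>f\<in>P_F m. f w \<noteq> 0) \<longleftrightarrow> w \<in> S_set m \<union> cnj ` S_set m"
proof -
  have Sim: "z \<in> S_set m \<Longrightarrow> Im z \<ge> 0" for z
    unfolding S_set_def by (auto simp: Arg_less_0)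
  have cimg: "w \<in> cnj ` S_set m \<longleftrightarrow> cnj w \<in> S_set m" for w
    by (metis complex_cnj_cnj image_iff)
  show ?thesis
  proof (cases "Im w \<ge> 0")
    case True
    have "w \<in> S_set m \<union> cnj ` S_set m \<longleftrightarrow> w \<in> S_set m"
    proof
      assume "w \<in> S_set m \<union> cnj ` S_set m"
      then show "w \<in> S_set m"
      proof
        assume "w \<in> cnj ` S_set m"
        then have c: "cnj w \<in> S_set m" using cimg by blast
        then have "Im w = 0" using Sim[OF c] True by simp
        then have "cnj w = w" by (simp add: complex_eq_iff)
        with c show ?thesis by simp
      qed
    qed auto
    then show ?thesis using upper[OF True] by simp
  next
    case False
    then have I: "Im (cnj w) \<ge> 0" by simp
    have "w \<notin> S_set m" using Sim False by auto
    then have "w \<in> S_set m \<union> cnj ` S_set m \<longleftrightarrow> cnj w \<in> S_set m" using cimg by blast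
    then show ?thesis using upper[OF I] PF_cnj by simp
  qed
qed

end
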